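(* $2^6\rightarrow 167\rightrightarrows 19$: there is an injective isotone map $\varphi:\mathbf 2^6\to F_4^-$ such that $\{\varphi(x)[p_1:=e]: x\in\mathbf 2^6,\ e\in\{0,1\}\}\supseteq F_3^-$. In particular there is an injective isotone map from $\mathbf 2^6$ into $F_4$.
   Context: $F_k$ is the set of monotone Boolean functions of $k$ variables $p_1,\dots,p_k$ (including constants $0,1$), ordered pointwise; $F_k^-=F_k\setminus\{0\}$. For $g\in F_k$ and $e\in\{0,1\}$, $g[p_1:=e]$ is the function of $p_2,\dots,p_k$ obtained by substituting $e$ for $p_1$. $\mathbf 2^i$ is $\{0,1\}^i$ with the coordinatewise order; isotone means order-preserving. Notation: $2^i\rightarrow|F_j^-|\rightrightarrows|F_{j-1}^-|$ means there is an injective isotone $\varphi:\mathbf 2^i\to F_j^-$ such that every element of $F_{j-1}^-$ equals $\varphi(x)[p_1:=e]$ for some $x$, $e$. Here $|F_3^-|=19$, $|F_4^-|=167$. *)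

theory Defs
  imports Main
begin

text \<open>Boolean functions of k variables p_1,...,p_k are represented as predicates on
bool lists; an assignment is a list of length k whose i-th entry (0-based) is the
value of p_(i+1). To make the representation canonical, the function is False on
lists of any other length.\<close>

definition cube :: "nat \<Rightarrow> bool list set" where
  "cube k = {xs. length xs = k}"

definition cube_le :: "bool list \<Rightarrow> bool list \<Rightarrow> bool" where
  "cube_le xs ys \<longleftrightarrow> list_all2 (\<le>) xs ys"

definition F :: "nat \<Rightarrow> (bool list \<Rightarrow> bool) set" where
  "F k = {f. (\<forall>xs. length xs \<noteq> k \<longrightarrow> \<not> f xs) \<and>
             (\<forall>xs\<in>cube k. \<forall>ys\<in>cube k. cube_le xs ys \<longrightarrow> f xs \<longrightarrow> f ys)}"

definition Fminus :: "nat \<Rightarrow> (bool list \<Rightarrow> bool) set" where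
  "Fminus k = F k - {\<lambda>_. False}"

text \<open>g[p_1 := e]: a function of the remaining variables p_2,...,p_k.\<close>
definition subst1 :: "(bool list \<Rightarrow> bool) \<Rightarrow> bool \<Rightarrow> (bool list \<Rightarrow> bool)" where
  "subst1 g e = (\<lambda>ys. g (e # ys))"

definition isotone_on_cube :: "nat \<Rightarrow> (bool list \<Rightarrow> 'b::ord) \<Rightarrow> bool" where
  "isotone_on_cube i \<phi> \<longleftrightarrow>
     (\<forall>x\<in>cube i. \<forall>y\<in>cube i. cube_le x y \<longrightarrow> \<phi> x \<le> \<phi> y)"

text \<open>2^i \<rightarrow> |F_j^-| \<rightrightarrows> |F_(j-1)^-|\<close>
definition arrows :: "nat \<Rightarrow> nat \<Rightarrow> bool" where
  "arrows i j \<longleftrightarrow> (\<exists>\<phi>. inj_on \<phi> (cube i) \<and> isotone_on_cube i \<phi> \<and>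
       \<phi> ` cube i \<subseteq> Fminus j \<and>
       (\<forall>g\<in>Fminus (j - 1). \<exists>x\<in>cube i. \<exists>e. g = subst1 (\<phi> x) e))"

end

theory Submission
  imports Defs
begin

definition phi :: "bool list \<Rightarrow> bool list \<Rightarrow> bool" where
"phi x ys = (length ys = 4 \<and> ((x!0 \<and> x!1 \<and> x!2 \<and> x!3 \<and> x!4 \<and> x!5) \<or> (ys!0 \<and> ys!1 \<and> ys!2 \<and> ys!3)
   \<or> (x!0 \<and> ys!0 \<and> ys!1) \<or> (x!1 \<and> ys!0 \<and> ys!2) \<or> (x!2 \<and> ys!0 \<and> ys!3)
   \<or> (x!3 \<and> ys!1 \<and> ys!2) \<or> (x!4 \<and> ys!1 \<and> ys!3) \<or> (x!5 \<and> ys!2 \<and> ys!3)))"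

lemma lt6: "(i::nat) < 6 \<Longrightarrow> i = 0 \<or> i = 1 \<or> i = 2 \<or> i = 3 \<or> i = 4 \<or> i = 5" by auto
lemma lt4: "(i::nat) < 4 \<Longrightarrow> i = 0 \<or> i = 1 \<or> i = 2 \<or> i = 3" by auto

lemma phi_inj: "inj_on phi (cube 6)"
proof (rule inj_onI)
  fix x y assume x: "x \<in> cube 6" and y: "y \<in> cube 6" and e: "phi x = phi y"
  have t0: "phi z [True,True,False,False] = z!0"
   and t1: "phi z [True,False,True,False] = z!1"
   and t2: "phi z [True,False,False,True] = z!2"
   and t3: "phi z [False,True,True,False] = z!3"
   and t4: "phi z [False,True,False,True] = z!4"
   and t5: "phi z [False,False,True,True] = z!5" for z by (auto simp: phi_def)
  have "\<forall>i<6. x!i = y!i" 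
  proof (intro allI impI)
    fix i :: nat assume "i < 6"
    then consider "i=0" | "i=1" | "i=2" | "i=3" | "i=4" | "i=5" by linarith
    then show "x!i = y!i" using e t0 t1 t2 t3 t4 t5 by cases metis+
  qed
  then show "x = y" using x y by (intro nth_equalityI) (auto simp: cube_def)
qed

lemma phi_iso: "isotone_on_cube 6 phi"
  unfolding isotone_on_cube_def
proof (intro ballI impI)
  fix x y assume x: "x \<in> cube 6" and y: "y \<in> cube 6" and le: "cube_le x y"
  have h: "\<And>i. i < 6 \<Longrightarrow> x!i \<le> y!i" using le x unfolding cube_le_def cube_def
    by (intro list_all2_nthD[where P="(\<le>)"]) auto
  have i: "x!0 \<Longrightarrow> y!0" "x!1 \<Longrightarrow> y!1" "x!2 \<Longrightarrow> y!2" "x!3 \<Longrightarrow> y!3" "x!4 \<Longrightarrow> y!4" "x!5 \<Longrightarrow> y!5"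
    using h[of 0] h[of 1] h[of 2] h[of 3] h[of 4] h[of 5] by auto
  show "phi x \<le> phi y" unfolding le_fun_def le_bool_def
  proof (intro allI impI)
    fix ys assume "phi x ys"
    then have L: "length ys = 4" and D: "(x!0 \<and> x!1 \<and> x!2 \<and> x!3 \<and> x!4 \<and> x!5) \<or> (ys!0 \<and> ys!1 \<and> ys!2 \<and> ys!3)
   \<or> (x!0 \<and> ys!0 \<and> ys!1) \<or> (x!1 \<and> ys!0 \<and> ys!2) \<or> (x!2 \<and> ys!0 \<and> ys!3)
   \<or> (x!3 \<and> ys!1 \<and> ys!2) \<or> (x!4 \<and> ys!1 \<and> ys!3) \<or> (x!5 \<and> ys!2 \<and> ys!3)"
      unfolding phi_def by simp_all
    from D show "phi y ys" by (elim disjE conjE) (simp_all only: phi_def L i simp_thms)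
  qed
qed

lemma phi_F: "phi x \<in> Fminus 4"
proof -
  have "phi x \<in> F 4"
    unfolding F_def
  proof (intro CollectI conjI allI impI ballI)
    fix xs :: "bool list" assume "length xs \<noteq> 4" then show "\<not> phi x xs" by (simp add: phi_def)
  next
    fix xs ys :: "bool list" assume xs: "xs \<in> cube 4" and ys: "ys \<in> cube 4" and le: "cube_le xs ys" and p: "phi x xs"
    have h: "\<And>i. i < 4 \<Longrightarrow> xs!i \<le> ys!i" using le xs unfolding cube_le_def cube_def
      by (intro list_all2_nthD[where P="(\<le>)"]) auto
    have i: "xs!0 \<Longrightarrow> ys!0" "xs!1 \<Longrightarrow> ys!1" "xs!2 \<Longrightarrow> ys!2" "xs!3 \<Longrightarrow> ys!3"
      using h[of 0] h[of 1] h[of 2] h[of 3] by auto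
    have L: "length ys = 4" using ys by (simp add: cube_def)
    have D: "(x!0 \<and> x!1 \<and> x!2 \<and> x!3 \<and> x!4 \<and> x!5) \<or> (xs!0 \<and> xs!1 \<and> xs!2 \<and> xs!3)
   \<or> (x!0 \<and> xs!0 \<and> xs!1) \<or> (x!1 \<and> xs!0 \<and> xs!2) \<or> (x!2 \<and> xs!0 \<and> xs!3)
   \<or> (x!3 \<and> xs!1 \<and> xs!2) \<or> (x!4 \<and> xs!1 \<and> xs!3) \<or> (x!5 \<and> xs!2 \<and> xs!3)"
      using p unfolding phi_def by simp
    from D show "phi x ys" by (elim disjE conjE) (simp_all only: phi_def L i simp_thms)
  qed
  moreover have "phi x \<noteq> (\<lambda>_. False)"
  proof
    assume "phi x = (\<lambda>_. False)"
    then have "phi x [True,True,True,True] = False" by simp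
    then show False by (simp add: phi_def)
  qed
  ultimately show ?thesis by (simp add: Fminus_def)
qed

lemma mono3:
  assumes "g \<in> F 3" "g [a,b,c]" "a \<longrightarrow> a'" "b \<longrightarrow> b'" "c \<longrightarrow> c'"
  shows "g [a',b',c']"
proof -
  have "cube_le [a,b,c] [a',b',c']" using assms(3-5) by (auto simp: cube_le_def le_bool_def)
  then show ?thesis using assms(1,2) unfolding F_def cube_def by auto
qed

lemma boolcase:
  assumes "a\<longrightarrow>d" "a\<longrightarrow>e" "b\<longrightarrow>d" "b\<longrightarrow>f" "c\<longrightarrow>e" "c\<longrightarrow>f"
  shows "((a \<and> b \<and> c \<and> (d \<and> \<not>(a\<and>b\<and>c)) \<and> (e \<and> \<not>(a\<and>b\<and>c)) \<and> (f \<and> \<not>(a\<and>b\<and>c)))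
           \<or> (u \<and> v \<and> w) \<or> (a \<and> u) \<or> (b \<and> v) \<or> (c \<and> w) \<or> ((d \<and> \<not>(a\<and>b\<and>c)) \<and> u \<and> v)
           \<or> ((e \<and> \<not>(a\<and>b\<and>c)) \<and> u \<and> w) \<or> ((f \<and> \<not>(a\<and>b\<and>c)) \<and> v \<and> w))
   = (if u then (if v then (if w then True else d) else (if w then e else a))
      else (if v then (if w then f else b) else (if w then c else False)))"
  using assms by (cases u; cases v; cases w) auto

lemma cover:
  assumes g: "g \<in> Fminus 3"
  shows "\<exists>x\<in>cube 6. \<exists>e. g = subst1 (phi x) e"
proof -
  have gF: "g \<in> F 3" using g by (simp add: Fminus_def)
  have off: "\<And>ys. length ys \<noteq> 3 \<Longrightarrow> \<not> g ys" using gF by (simp add: F_def)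
  have m: "\<And>a b c a' b' c'. g [a,b,c] \<Longrightarrow> a \<longrightarrow> a' \<Longrightarrow> b \<longrightarrow> b' \<Longrightarrow> c \<longrightarrow> c' \<Longrightarrow> g [a',b',c']"
    using mono3[OF gF] by blast
  have len3: "\<And>ys. length ys = 3 \<Longrightarrow> \<exists>a b c. ys = [a,b,c]"
    by (auto simp: numeral_3_eq_3 length_Suc_conv)
  show ?thesis
  proof (cases "g [False,False,False]")
    case True
    let ?x = "[True,True,True,True,True,True]"
    have "g = subst1 (phi ?x) True"
    proof
      fix ys show "g ys = subst1 (phi ?x) True ys"
      proof (cases "length ys = 3")
        case True
        then obtain a b c where "ys = [a,b,c]" using len3 by blast
        then show ?thesis using m[OF \<open>g [False,False,False]\<close>, of a b c]
          by (simp add: subst1_def phi_def)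
      next
        case False then show ?thesis using off by (simp add: subst1_def phi_def)
      qed
    qed
    then show ?thesis by (intro bexI[of _ ?x]) (auto simp: cube_def)
  next
    case False
    define a where "a = g [True,False,False]"
    define b where "b = g [False,True,False]"
    define c where "c = g [False,False,True]"
    define d where "d = g [True,True,False]"
    define e where "e = g [True,False,True]"
    define f where "f = g [False,True,True]"
    define t where "t = g [True,True,True]"
    define x where "x = [a,b,c, d \<and> \<not>(a\<and>b\<and>c), e \<and> \<not>(a\<and>b\<and>c), f \<and> \<not>(a\<and>b\<and>c)]"
    have e1: "a \<longrightarrow> d" "a \<longrightarrow> e" "b \<longrightarrow> d" "b \<longrightarrow> f" "c \<longrightarrow> e" "c \<longrightarrow> f"
      unfolding a_def b_def c_def d_def e_def f_def using m by blast+
    have top: "g [True,True,True]"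
    proof (rule ccontr)
      assume n: "\<not> g [True,True,True]"
      have "g = (\<lambda>_. False)"
      proof
        fix zs show "g zs = False"
        proof (cases "length zs = 3")
          case True
          then obtain p q r where "zs = [p,q,r]" using len3 by blast
          then show ?thesis using n m[of p q r True True True] by auto
        qed (use off in auto)
      qed
      then show False using g by (simp add: Fminus_def)
    qed
    have "g = subst1 (phi x) True"
    proof
      fix ys show "g ys = subst1 (phi x) True ys"
      proof (cases "length ys = 3")
        case True
        then obtain u v w where ys: "ys = [u,v,w]" using len3 by blast
        have P: "\<And>u v w. subst1 (phi x) True [u,v,w] = ((a \<and> b \<and> c \<and> (d \<and> \<not>(a\<and>b\<and>c)) \<and> (e \<and> \<not>(a\<and>b\<and>c)) \<and> (f \<and> \<not>(a\<and>b\<and>c)))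
           \<or> (u \<and> v \<and> w) \<or> (a \<and> u) \<or> (b \<and> v) \<or> (c \<and> w) \<or> ((d \<and> \<not>(a\<and>b\<and>c)) \<and> u \<and> v)
           \<or> ((e \<and> \<not>(a\<and>b\<and>c)) \<and> u \<and> w) \<or> ((f \<and> \<not>(a\<and>b\<and>c)) \<and> v \<and> w))"
          unfolding subst1_def phi_def x_def by simp
        have fa: "a = g [True,False,False]" "b = g [False,True,False]" "c = g [False,False,True]"
          "d = g [True,True,False]" "e = g [True,False,True]" "f = g [False,True,True]"
          using a_def b_def c_def d_def e_def f_def by simp_all
        have G: "\<not> g [False,False,False]" "g [True,True,True]" using False top by simp_all
        have Q: "g [u,v,w] = (if u then (if v then (if w then True else d) else (if w then e else a))
      else (if v then (if w then f else b) else (if w then c else False)))"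
          using G by (cases u; cases v; cases w) (simp_all add: fa)
        show ?thesis unfolding ys P Q boolcase[OF e1] ..
      next
        case False then show ?thesis using off by (simp add: subst1_def phi_def)
      qed
    qed
    moreover have "x \<in> cube 6" by (simp add: x_def cube_def)
    ultimately show ?thesis by blast
  qed
qed

theorem mainTheorem10:
  shows "arrows 6 4 \<and>
    (\<exists>\<phi>. inj_on \<phi> (cube 6) \<and> isotone_on_cube 6 \<phi> \<and> \<phi> ` cube 6 \<subseteq> F 4)"
proof -
  have a: "arrows 6 4"
    unfolding arrows_def using phi_inj phi_iso phi_F cover
    by (intro exI[of _ phi]) auto
  have "phi ` cube 6 \<subseteq> F 4" using phi_F by (auto simp: Fminus_def)
  then show ?thesis using a phi_inj phi_iso by blast
qed

end
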